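(* Let $1\le n\le N$, $k\ge0$ and $L_0>8\mathrm r_0$. If the $n$-particle cubes $\Lambda^{(n)}_{L_k}(\mathbf u)$ and $\Lambda^{(n)}_{L_k}(\mathbf v)$ are both fully interactive and $\|\mathbf u-\mathbf v\|\ge 11nL_k$, then they are completely separable. Moreover, the random operators $\mathbf H^{(n)}_{\Lambda^{(n)}_{L_k}(\mathbf u)}$ and $\mathbf H^{(n)}_{\Lambda^{(n)}_{L_k}(\mathbf v)}$ are independent.
   Context: Points of $\mathbb Z^{nd}$ are $\mathbf x=(x_1,\dots,x_n)$, $x_j\in\mathbb Z^d$, with $\|x_j\|=\max_i|x_j^{(i)}|$, $\|\mathbf x\|=\max_j\|x_j\|$, $\langle x\rangle=\max\{1,\|x\|\}$. Cubes $\Lambda^{(n)}_L(\mathbf u)=\{\mathbf x\in\mathbb Z^{nd}:\|\mathbf x-\mathbf u\|\le L\}$; $L_k=L_0^{4^k}$. Projections: $\Pi_j\mathbf x=x_j$, $\Pi\Lambda=\bigcup_{j=1}^n\Pi_j\Lambda\subset\mathbb Z^d$. The random $n$-particle operator is $\mathbf H^{(n)}_\omega=\frac1g(\mathbf T+\mathbf U)+\mathbf V(\cdot,\omega)$ on $\ell^2(\mathbb Z^{nd})$ with $g\ne0$: $\mathbf T(\mathbf x,\mathbf y)=\langle y_j-x_j\rangle^{-r}$ if there is $j$ with $x_i=y_i$ for all $i\ne j$, else $0$; $\mathbf U(\mathbf x)=\sum_{j_1<j_2}U(x_{j_1},x_{j_2})$ with $U$ bounded symmetric and $U(x,x')=0$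 if $\|x-x'\|\ge\mathrm r_0$ ($\mathrm r_0\ge1$); $\mathbf V(\mathbf x,\omega)=\sum_jV(x_j,\omega)$ with $V(x,\omega)$, $x\in\mathbb Z^d$, i.i.d. real random variables. $\mathbf H^{(n)}_\Lambda$ denotes the restriction of $\mathbf H^{(n)}_\omega$ to $\Lambda$ (the matrix $(\mathbf H^{(n)}_\omega(\mathbf x,\mathbf y))_{\mathbf x,\mathbf y\in\Lambda}$). A cube $\Lambda^{(n)}_L(\mathbf u)$ is fully interactive if $\min_{x\in\mathbb Z^d}\max_{1\le j\le n}\|u_j-x\|\le2n(L+\mathrm r_0)$. Two cubes $\Lambda^{(n)}_L(\mathbf u),\Lambda^{(n)}_L(\mathbf v)$ are completely separable if $\Pi\Lambda^{(n)}_{L+\mathrm r_0}(\mathbf u)\cap\Pi\Lambda^{(n)}_{L+\mathrm r_0}(\mathbf v)=\emptyset$. *)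

theory Defs
  imports "HOL-Probability.Probability"
begin

text \<open>Points of Z^d are int^'d (d = CARD('d)); an n-particle configuration in Z^{nd}
  is a function nat => int^'d whose entries with index j >= n are 0 (particles are
  indexed 0..n-1).\<close>

type_synonym 'd site = "int ^ 'd"
type_synonym 'd conf = "nat \<Rightarrow> int ^ 'd"

definition snorm :: "('d::finite) site \<Rightarrow> int" where
  "snorm x = Max ((\<lambda>i. \<bar>x $ i\<bar>) ` UNIV)"

definition bracket :: "('d::finite) site \<Rightarrow> int" where
  "bracket x = max 1 (snorm x)"

definition is_conf :: "nat \<Rightarrow> ('d::finite) conf \<Rightarrow> bool" where
  "is_conf n x \<longleftrightarrow> (\<forall>j\<ge>n. x j = 0)"

definition cnorm :: "nat \<Rightarrow> ('d::finite) conf \<Rightarrow> int" where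
  "cnorm n x = Max ((\<lambda>j. snorm (x j)) ` {..<n})"

definition cube :: "nat \<Rightarrow> real \<Rightarrow> ('d::finite) conf \<Rightarrow> ('d::finite) conf set" where
  "cube n L u = {x. is_conf n x \<and> real_of_int (cnorm n (\<lambda>j. x j - u j)) \<le> L}"

definition proj :: "nat \<Rightarrow> ('d::finite) conf set \<Rightarrow> 'd site set" where
  "proj n A = (\<Union>j<n. (\<lambda>x. x j) ` A)"

definition fully_interactive :: "nat \<Rightarrow> real \<Rightarrow> real \<Rightarrow> ('d::finite) conf \<Rightarrow> bool" where
  "fully_interactive n r0 L u \<longleftrightarrow>
     (\<exists>x::'d site. real_of_int (Max ((\<lambda>j. snorm (u j - x)) ` {..<n})) \<le> 2 * real n * (L + r0))"

definition completely_separable :: "nat \<Rightarrow> real \<Rightarrow> real \<Rightarrow> ('d::finite) conf \<Rightarrow> 'd conf \<Rightarrow> bool" where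
  "completely_separable n r0 L u v \<longleftrightarrow>
     proj n (cube n (L + r0) u) \<inter> proj n (cube n (L + r0) v) = {}"

definition hopT :: "nat \<Rightarrow> real \<Rightarrow> ('d::finite) conf \<Rightarrow> 'd conf \<Rightarrow> real" where
  "hopT n r x y =
     (if \<exists>j<n. \<forall>i<n. i \<noteq> j \<longrightarrow> x i = y i
      then (let j = (SOME j. j < n \<and> (\<forall>i<n. i \<noteq> j \<longrightarrow> x i = y i))
            in real_of_int (bracket (y j - x j)) powr (- r))
      else 0)"

definition interU :: "nat \<Rightarrow> ('d site \<Rightarrow> 'd site \<Rightarrow> real) \<Rightarrow> ('d::finite) conf \<Rightarrow> real" where
  "interU n U x = (\<Sum>j2<n. \<Sum>j1<j2. U (x j1) (x j2))"

definition Hmat :: "nat \<Rightarrow> real \<Rightarrow> real \<Rightarrow> ('d site \<Rightarrow> 'd site \<Rightarrow> real)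
                    \<Rightarrow> ('d site \<Rightarrow> 'w \<Rightarrow> real) \<Rightarrow> ('d::finite) conf \<Rightarrow> 'd conf \<Rightarrow> 'w \<Rightarrow> real" where
  "Hmat n g r U V x y \<omega> =
     (1 / g) * (hopT n r x y + (if x = y then interU n U x else 0))
     + (if x = y then (\<Sum>j<n. V (x j) \<omega>) else 0)"

definition Hrestr :: "nat \<Rightarrow> real \<Rightarrow> real \<Rightarrow> ('d site \<Rightarrow> 'd site \<Rightarrow> real)
                    \<Rightarrow> ('d site \<Rightarrow> 'w \<Rightarrow> real) \<Rightarrow> ('d::finite) conf set \<Rightarrow> 'w \<Rightarrow> ('d conf \<times> 'd conf \<Rightarrow> real)" where
  "Hrestr n g r U V \<Lambda> \<omega> = restrict (\<lambda>(x, y). Hmat n g r U V x y \<omega>) (\<Lambda> \<times> \<Lambda>)"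

definition matspace :: "('d::finite) conf set \<Rightarrow> ('d conf \<times> 'd conf \<Rightarrow> real) measure" where
  "matspace \<Lambda> = PiM (\<Lambda> \<times> \<Lambda>) (\<lambda>_. borel)"

end

theory Submission
  imports Defs
begin

lemma snorm_ge: "\<bar>x $ i\<bar> \<le> snorm (x::('d::finite) site)"
  unfolding snorm_def by (rule Max_ge) auto

lemma snorm_le: "(\<And>i. \<bar>x $ i\<bar> \<le> c) \<Longrightarrow> snorm (x::('d::finite) site) \<le> c"
  unfolding snorm_def by (subst Max_le_iff) auto

lemma snorm_tri: "snorm (a - c) \<le> snorm (a - b) + snorm (b - (c::('d::finite) site))"
proof (rule snorm_le)
  fix i
  have "\<bar>(a - c) $ i\<bar> \<le> \<bar>(a - b) $ i\<bar> + \<bar>(b - c) $ i\<bar>" by simp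
  also have "\<dots> \<le> snorm (a - b) + snorm (b - c)" using snorm_ge add_mono by blast
  finally show "\<bar>(a - c) $ i\<bar> \<le> snorm (a - b) + snorm (b - c)" .
qed

lemma snorm_sym: "snorm (a - b) = snorm (b - (a::('d::finite) site))"
  unfolding snorm_def by (metis (no_types, opaque_lifting) abs_minus_commute vector_minus_component)

lemma cnorm_ge: "j < n \<Longrightarrow> snorm (x j) \<le> cnorm n x"
  unfolding cnorm_def by (rule Max_ge) auto

lemma cnorm_attained: "1 \<le> n \<Longrightarrow> \<exists>j<n. cnorm n x = snorm (x j)"
proof -
  assume "1 \<le> n"
  then have "cnorm n x \<in> (\<lambda>j. snorm (x j)) ` {..<n}" unfolding cnorm_def
    by (intro Max_in) (auto simp: lessThan_empty_iff)
  then show ?thesis by auto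
qed

lemma fi_bound: "fully_interactive n r0 L u \<Longrightarrow> \<exists>x. \<forall>j<n. real_of_int (snorm (u j - x)) \<le> 2 * real n * (L + r0)"
proof -
  assume "fully_interactive n r0 L u"
  then obtain x where x: "real_of_int (Max ((\<lambda>j. snorm (u j - x)) ` {..<n})) \<le> 2 * real n * (L + r0)"
    unfolding fully_interactive_def by blast
  have "\<forall>j<n. real_of_int (snorm (u j - x)) \<le> 2 * real n * (L + r0)"
  proof (intro allI impI)
    fix j assume "j < n"
    then have "snorm (u j - x) \<le> Max ((\<lambda>j. snorm (u j - x)) ` {..<n})" by (intro Max_ge) auto
    then show "real_of_int (snorm (u j - x)) \<le> 2 * real n * (L + r0)" using x by linarith
  qed
  then show ?thesis by blast
qed

lemma proj_cube: "z \<in> proj n (cube n R u) \<Longrightarrow> \<exists>a<n. real_of_int (snorm (z - u a)) \<le> R"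
proof -
  assume "z \<in> proj n (cube n R u)"
  then obtain a w where a: "a < n" "w \<in> cube n R u" "z = w a" unfolding proj_def by auto
  then have "snorm (w a - u a) \<le> cnorm n (\<lambda>j. w j - u j)" using cnorm_ge[of a n "\<lambda>j. w j - u j"] by simp
  with a show ?thesis unfolding cube_def by force
qed

lemma proj_mono: "R \<le> R' \<Longrightarrow> proj n (cube n R u) \<subseteq> proj n (cube n R' u)"
  unfolding proj_def cube_def by fastforce

lemma lin6: "(p::real) \<le> a1 + a2 + a3 + a4 + a5 + a6 \<Longrightarrow> a1 \<le> K \<Longrightarrow> a2 \<le> K \<Longrightarrow> a3 \<le> R
  \<Longrightarrow> a4 \<le> R \<Longrightarrow> a5 \<le> K \<Longrightarrow> a6 \<le> K \<Longrightarrow> K = 2 * real n * R \<Longrightarrow> p \<le> 8 * real n * R + 2 * R"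
  by linarith

lemma lin2: "(p::real) \<le> a1 + a2 \<Longrightarrow> a1 \<le> R \<Longrightarrow> a2 \<le> R \<Longrightarrow> p \<le> 2 * R"
  by linarith

lemma separ:
  fixes u v :: "('d::finite) conf" and L r0 :: real
  assumes "r0 \<ge> 1" "L > 8 * r0" "1 \<le> n"
    and "fully_interactive n r0 L u" "fully_interactive n r0 L v"
    and "real_of_int (cnorm n (\<lambda>j. u j - v j)) \<ge> 11 * real n * L"
  shows "completely_separable n r0 L u v"
  unfolding completely_separable_def
proof (rule ccontr)
  assume "proj n (cube n (L + r0) u) \<inter> proj n (cube n (L + r0) v) \<noteq> {}"
  then obtain z where z1: "z \<in> proj n (cube n (L + r0) u)" and z2: "z \<in> proj n (cube n (L + r0) v)" by blast
  obtain a where a: "a < n" "real_of_int (snorm (z - u a)) \<le> L + r0" using proj_cube[OF z1] by blast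
  obtain b where b: "b < n" "real_of_int (snorm (z - v b)) \<le> L + r0" using proj_cube[OF z2] by blast
  obtain j where j: "j < n" "cnorm n (\<lambda>j. u j - v j) = snorm (u j - v j)" using cnorm_attained[OF assms(3)] by blast
  obtain x where x: "\<forall>j<n. real_of_int (snorm (u j - x)) \<le> 2 * real n * (L + r0)" using fi_bound[OF assms(4)] by blast
  obtain y where y: "\<forall>j<n. real_of_int (snorm (v j - y)) \<le> 2 * real n * (L + r0)" using fi_bound[OF assms(5)] by blast
  have big: "real_of_int (snorm (u j - v j)) \<ge> 11 * real n * L" using assms(6) j by simp
  show False
  proof (cases "n = 1")
    case True
    then have "a = j" "b = j" using a b j by auto
    have "snorm (u j - v j) \<le> snorm (u j - z) + snorm (z - v j)" by (rule snorm_tri)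
    also have "\<dots> = snorm (z - u j) + snorm (z - v j)" by (simp add: snorm_sym)
    finally have h: "real_of_int (snorm (u j - v j)) \<le> real_of_int (snorm (z - u j)) + real_of_int (snorm (z - v j))" by linarith
    have "real_of_int (snorm (u j - v j)) \<le> 2 * (L + r0)" using h a(2) b(2) unfolding \<open>a = j\<close> \<open>b = j\<close> by (rule lin2)
    with big True assms(1,2) show False by simp
  next
    case False
    then have n2: "real n \<ge> 2" using assms(3) by simp
    have t1: "snorm (u j - v j) \<le> snorm (u j - x) + snorm (x - v j)" by (rule snorm_tri)
    have t2: "snorm (x - v j) \<le> snorm (x - u a) + snorm (u a - v j)" by (rule snorm_tri)
    have t3: "snorm (u a - v j) \<le> snorm (u a - z) + snorm (z - v j)" by (rule snorm_tri)
    have t4: "snorm (z - v j) \<le> snorm (z - v b) + snorm (v b - v j)" by (rule snorm_tri)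
    have t5: "snorm (v b - v j) \<le> snorm (v b - y) + snorm (y - v j)" by (rule snorm_tri)
    have s1: "snorm (x - u a) = snorm (u a - x)" "snorm (u a - z) = snorm (z - u a)" "snorm (y - v j) = snorm (v j - y)"
      by (simp_all add: snorm_sym)
    have ti: "snorm (u j - v j) \<le> snorm (u j - x) + snorm (u a - x) + snorm (z - u a) + snorm (z - v b) + snorm (v b - y) + snorm (v j - y)"
      using t1 t2 t3 t4 t5 s1 by linarith
    have tr: "real_of_int (snorm (u j - v j)) \<le> real_of_int (snorm (u j - x)) + real_of_int (snorm (u a - x)) + real_of_int (snorm (z - u a))
       + real_of_int (snorm (z - v b)) + real_of_int (snorm (v b - y)) + real_of_int (snorm (v j - y))"
      using ti by (simp only: of_int_add[symmetric] of_int_le_iff)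
    have "real_of_int (snorm (u j - v j)) \<le> 8 * real n * (L + r0) + 2 * (L + r0)"
      by (rule lin6[OF tr x[rule_format, OF j(1)] x[rule_format, OF a(1)] a(2) b(2) y[rule_format, OF b(1)] y[rule_format, OF j(1)] refl])
    moreover have "8 * real n * (L + r0) + 2 * (L + r0) < 11 * real n * L"
    proof -
      have "(8 * real n + 2) * r0 < (8 * real n + 2) * (L / 8)" using assms(2) n2 by (intro mult_strict_left_mono) auto
      moreover have "(8 * real n + 2) * L + (8 * real n + 2) * (L / 8) \<le> 11 * real n * L"
      proof -
        have "L > 0" using assms(1,2) by linarith
        have "(9 / 4) * L \<le> 2 * real n * L" using n2 \<open>L > 0\<close> by (intro mult_right_mono) auto
        then show ?thesis by (simp add: algebra_simps)
      qed
      ultimately show ?thesis by (simp add: algebra_simps)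
    qed
    ultimately show False using big by linarith
  qed
qed

definition Fmat :: "nat \<Rightarrow> real \<Rightarrow> real \<Rightarrow> ('d site \<Rightarrow> 'd site \<Rightarrow> real)
   \<Rightarrow> ('d::finite) conf set \<Rightarrow> ('d site \<Rightarrow> real) \<Rightarrow> ('d conf \<times> 'd conf \<Rightarrow> real)" where
  "Fmat n g r U \<Lambda> y = restrict (\<lambda>(x, x'). (1 / g) * (hopT n r x x' + (if x = x' then interU n U x else 0))
     + (if x = x' then (\<Sum>j<n. y (x j)) else 0)) (\<Lambda> \<times> \<Lambda>)"

lemma Fmat_meas: "Fmat n g r U \<Lambda> \<in> measurable (PiM (proj n \<Lambda>) (\<lambda>_. borel)) (matspace \<Lambda>)"
  unfolding matspace_def Fmat_def
proof (rule measurable_restrict)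
  fix p assume p: "p \<in> \<Lambda> \<times> \<Lambda>"
  obtain x x' where xx: "p = (x, x')" by force
  have xin: "\<And>j. j < n \<Longrightarrow> x j \<in> proj n \<Lambda>" using p xx unfolding proj_def by auto
  have "(\<lambda>y. \<Sum>j<n. (y (x j) :: real)) \<in> borel_measurable (PiM (proj n \<Lambda>) (\<lambda>_. borel))"
  proof (rule borel_measurable_sum)
    fix j assume "j \<in> {..<n}"
    then have "x j \<in> proj n \<Lambda>" using xin by simp
    then show "(\<lambda>y. (y (x j) :: real)) \<in> borel_measurable (PiM (proj n \<Lambda>) (\<lambda>_. borel))"
      by (rule measurable_component_singleton)
  qed
  then show "(\<lambda>y. (case p of (x, x') \<Rightarrow> (1 / g) * (hopT n r x x' + (if x = x' then interU n U x else 0))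
     + (if x = x' then (\<Sum>j<n. y (x j)) else 0))) \<in> borel_measurable (PiM (proj n \<Lambda>) (\<lambda>_. borel))"
    unfolding xx by (cases "x = x'") auto
qed

lemma Hrestr_Fmat: "Hrestr n g r U V \<Lambda> = Fmat n g r U \<Lambda> \<circ> (\<lambda>\<omega>. restrict (\<lambda>i. V i \<omega>) (proj n \<Lambda>))"
proof (rule ext)
  fix \<omega>
  show "Hrestr n g r U V \<Lambda> \<omega> = (Fmat n g r U \<Lambda> \<circ> (\<lambda>\<omega>. restrict (\<lambda>i. V i \<omega>) (proj n \<Lambda>))) \<omega>"
    unfolding Hrestr_def Fmat_def Hmat_def comp_def
  proof (rule restrict_ext)
    fix p assume p: "p \<in> \<Lambda> \<times> \<Lambda>"
    obtain x x' where xx: "p = (x, x')" by force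
    have xin: "\<And>j. j < n \<Longrightarrow> x j \<in> proj n \<Lambda>" using p xx unfolding proj_def by auto
    then have "(\<Sum>j<n. restrict (\<lambda>i. V i \<omega>) (proj n \<Lambda>) (x j)) = (\<Sum>j<n. V (x j) \<omega>)"
      by (intro sum.cong) auto
    then show "(case p of (x, y) \<Rightarrow> 1 / g * (hopT n r x y + (if x = y then interU n U x else 0)) + (if x = y then \<Sum>j<n. V (x j) \<omega> else 0)) =
         (case p of (x, x') \<Rightarrow> 1 / g * (hopT n r x x' + (if x = x' then interU n U x else 0)) + (if x = x' then \<Sum>j<n. restrict (\<lambda>i. V i \<omega>) (proj n \<Lambda>) (x j) else 0))"
      unfolding xx by (cases "x = x'") auto
  qed
qed

theorem lemma3p7:
  fixes M :: "'w measure"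
    and V :: "('d::finite) site \<Rightarrow> 'w \<Rightarrow> real"
    and U :: "'d site \<Rightarrow> 'd site \<Rightarrow> real"
    and g r r0 L0 :: real and n N k :: nat and u v :: "'d conf"
  assumes "prob_space M"
    and "prob_space.indep_vars M (\<lambda>_. borel) V UNIV"
    and "\<forall>x y. distr M borel (V x) = distr M borel (V y)"
    and "g \<noteq> 0"
    and "\<exists>B. \<forall>x y. \<bar>U x y\<bar> \<le> B"
    and "\<forall>x y. U x y = U y x"
    and "\<forall>x y. real_of_int (snorm (x - y)) \<ge> r0 \<longrightarrow> U x y = 0"
    and "r0 \<ge> 1"
    and "1 \<le> n" and "n \<le> N"
    and "L0 > 8 * r0"
    and "is_conf n u" and "is_conf n v"
    and "fully_interactive n r0 (L0 ^ (4 ^ k)) u"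
    and "fully_interactive n r0 (L0 ^ (4 ^ k)) v"
    and "real_of_int (cnorm n (\<lambda>j. u j - v j)) \<ge> 11 * real n * L0 ^ (4 ^ k)"
  shows "completely_separable n r0 (L0 ^ (4 ^ k)) u v
     \<and> prob_space.indep_var M
         (matspace (cube n (L0 ^ (4 ^ k)) u)) (Hrestr n g r U V (cube n (L0 ^ (4 ^ k)) u))
         (matspace (cube n (L0 ^ (4 ^ k)) v)) (Hrestr n g r U V (cube n (L0 ^ (4 ^ k)) v))"
proof -
  interpret prob_space M by fact
  define L where "L = L0 ^ (4 ^ k)"
  have "L0 ^ 1 \<le> L0 ^ (4 ^ k)" using assms(8,11) by (intro power_increasing) auto
  then have L: "L > 8 * r0" using assms(11) unfolding L_def by simp
  have sep: "completely_separable n r0 L u v"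
    using separ[OF assms(8) L assms(9)] assms(14,15,16) unfolding L_def by blast
  define A where "A = proj n (cube n L u)"
  define B where "B = proj n (cube n L v)"
  have "A \<subseteq> proj n (cube n (L + r0) u)" "B \<subseteq> proj n (cube n (L + r0) v)"
    unfolding A_def B_def using assms(8) by (auto intro!: proj_mono)
  then have AB: "A \<inter> B = {}" using sep unfolding completely_separable_def by blast
  have ind: "indep_var (PiM A (\<lambda>_. borel)) (\<lambda>\<omega>. restrict (\<lambda>i. V i \<omega>) A) (PiM B (\<lambda>_. borel)) (\<lambda>\<omega>. restrict (\<lambda>i. V i \<omega>) B)"
    using assms(2) AB by (intro indep_var_restrict) auto
  have "indep_var (matspace (cube n L u)) (Fmat n g r U (cube n L u) \<circ> (\<lambda>\<omega>. restrict (\<lambda>i. V i \<omega>) A))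
      (matspace (cube n L v)) (Fmat n g r U (cube n L v) \<circ> (\<lambda>\<omega>. restrict (\<lambda>i. V i \<omega>) B))"
    by (rule indep_var_compose[OF ind]) (simp_all add: A_def B_def Fmat_meas)
  then have "indep_var (matspace (cube n L u)) (Hrestr n g r U V (cube n L u))
      (matspace (cube n L v)) (Hrestr n g r U V (cube n L v))"
    unfolding A_def B_def Hrestr_Fmat .
  with sep show ?thesis unfolding L_def by blast
qed

end
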